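(* Let $H^2(\beta)$ be a weighted Hardy space on $\mathbb{D}$ with weights $\beta=(\beta_n)_{n\ge0}$, and let $\varphi$ be a holomorphic self-map of $\mathbb{D}$ such that $C_\varphi:H^2(\beta)\to H^2(\beta)$ is bounded. Then $C_\varphi^*$ is a composition operator (i.e. $C_\varphi^*=C_\psi$ for some map $\psi:\mathbb{D}\to\mathbb{D}$) if and only if $\varphi(z)=\delta z$ for some $\delta\in\mathbb{C}$ with $|\delta|\le1$.
   Context: $\mathbb{D}$ is the open unit disc. Let $(\beta_n)_{n\ge0}$ be a sequence with $\beta_0=1$, $\beta_n>0$ for all $n$, and $\liminf_n\beta_n^{1/n}\ge1$. The weighted Hardy space $H^2(\beta)$ consists of holomorphic $f(z)=\sum_{n\ge0}a_nz^n$ on $\mathbb{D}$ with $\|f\|^2=\sum_{n\ge0}|a_n|^2\beta_n^2<\infty$, with inner product $\langle f,g\rangle=\sum_n a_n\overline{b_n}\beta_n^2$ for $g=\sum b_nz^n$. It is a reproducing kernel Hilbert space with kernel $\kappa_w(z)=\sum_{n\ge0}\frac{\overline{w}^nz^n}{\beta_n^2}$. $C_\varphi f=f\circ\varphi$ and $C_\varphi^*$ is its Hilbert space adjoint. *)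

theory Defs
  imports "HOL-Complex_Analysis.Complex_Analysis"
begin

abbreviation disc :: "complex set" where "disc \<equiv> ball 0 1"

definition tcoeff :: "(complex \<Rightarrow> complex) \<Rightarrow> nat \<Rightarrow> complex" where
  "tcoeff f n = (deriv ^^ n) f 0 / of_nat (fact n)"

definition weight_seq :: "(nat \<Rightarrow> real) \<Rightarrow> bool" where
  "weight_seq \<beta> \<longleftrightarrow> \<beta> 0 = 1 \<and> (\<forall>n. \<beta> n > 0) \<and>
     Liminf sequentially (\<lambda>n. ereal (root n (\<beta> n))) \<ge> 1"

definition in_H2 :: "(nat \<Rightarrow> real) \<Rightarrow> (complex \<Rightarrow> complex) \<Rightarrow> bool" where
  "in_H2 \<beta> f \<longleftrightarrow> f holomorphic_on disc \<and>
     summable (\<lambda>n. (cmod (tcoeff f n))^2 * (\<beta> n)^2)"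

definition H2_norm :: "(nat \<Rightarrow> real) \<Rightarrow> (complex \<Rightarrow> complex) \<Rightarrow> real" where
  "H2_norm \<beta> f = sqrt (\<Sum>n. (cmod (tcoeff f n))^2 * (\<beta> n)^2)"

definition H2_inner :: "(nat \<Rightarrow> real) \<Rightarrow> (complex \<Rightarrow> complex) \<Rightarrow> (complex \<Rightarrow> complex) \<Rightarrow> complex" where
  "H2_inner \<beta> f g = (\<Sum>n. tcoeff f n * cnj (tcoeff g n) * of_real ((\<beta> n)^2))"

definition bounded_comp_op :: "(nat \<Rightarrow> real) \<Rightarrow> (complex \<Rightarrow> complex) \<Rightarrow> bool" where
  "bounded_comp_op \<beta> \<phi> \<longleftrightarrow> \<phi> holomorphic_on disc \<and> \<phi> ` disc \<subseteq> disc \<and>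
     (\<forall>f. in_H2 \<beta> f \<longrightarrow> in_H2 \<beta> (f \<circ> \<phi>)) \<and>
     (\<exists>C. \<forall>f. in_H2 \<beta> f \<longrightarrow> H2_norm \<beta> (f \<circ> \<phi>) \<le> C * H2_norm \<beta> f)"

definition adjoint_is_comp :: "(nat \<Rightarrow> real) \<Rightarrow> (complex \<Rightarrow> complex) \<Rightarrow> (complex \<Rightarrow> complex) \<Rightarrow> bool" where
  "adjoint_is_comp \<beta> \<phi> \<psi> \<longleftrightarrow> \<psi> ` disc \<subseteq> disc \<and>
     (\<forall>g. in_H2 \<beta> g \<longrightarrow> in_H2 \<beta> (g \<circ> \<psi>)) \<and>
     (\<forall>f g. in_H2 \<beta> f \<longrightarrow> in_H2 \<beta> g \<longrightarrow>
        H2_inner \<beta> (f \<circ> \<phi>) g = H2_inner \<beta> f (g \<circ> \<psi>))"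

end

theory Submission
  imports Defs
begin

lemma tcoeff_pow: "tcoeff (\<lambda>z. z ^ k) n = (if n = k then 1 else 0)"
proof -
  have "(deriv ^^ n) (\<lambda>w. (w - 0) ^ k) 0 = pochhammer (of_nat (Suc k - n)) n * (0 - 0) ^ (k - n)"
    by (rule higher_deriv_power)
  then have h: "(deriv ^^ n) (\<lambda>w. w ^ k) 0 = pochhammer (of_nat (Suc k - n)) n * (0::complex) ^ (k - n)"
    by simp
  show ?thesis
  proof (cases "n = k")
    case True
    then show ?thesis using h by (simp add: tcoeff_def flip: pochhammer_fact)
  next
    case False
    show ?thesis
    proof (cases "n < k")
      case True then show ?thesis using h by (simp add: tcoeff_def)
    next
      case f2: False
      then have "Suc k - n = 0" using False by simp
      then show ?thesis using h False f2 by (simp add: tcoeff_def pochhammer_0_left)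
    qed
  qed
qed


lemma in_H2_pow: "in_H2 \<beta> (\<lambda>z. z ^ k)"
proof -
  have "(\<lambda>n. (cmod (tcoeff (\<lambda>z. z ^ k) n))^2 * (\<beta> n)^2) = (\<lambda>n. if n = k then (\<beta> k)^2 else 0)"
    by (auto simp: tcoeff_pow)
  moreover have "summable (\<lambda>n. if n = k then (\<beta> k)^2 else 0)"
    using sums_single[of k "\<lambda>_. (\<beta> k)^2"] by (auto simp: sums_iff)
  ultimately show ?thesis unfolding in_H2_def by (auto intro: holomorphic_intros)
qed

lemma inner_pow_right: "H2_inner \<beta> f (\<lambda>z. z ^ k) = tcoeff f k * of_real ((\<beta> k)^2)"
proof -
  have "(\<lambda>n. tcoeff f n * cnj (tcoeff (\<lambda>z. z ^ k) n) * of_real ((\<beta> n)^2))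
      = (\<lambda>n. if n = k then tcoeff f k * of_real ((\<beta> k)^2) else 0)"
    by (auto simp: tcoeff_pow)
  then show ?thesis unfolding H2_inner_def
    using sums_single[of k "\<lambda>_. tcoeff f k * of_real ((\<beta> k)^2)"] by (simp add: sums_iff)
qed

lemma inner_pow_left: "H2_inner \<beta> (\<lambda>z. z ^ k) h = cnj (tcoeff h k) * of_real ((\<beta> k)^2)"
proof -
  have "(\<lambda>n. tcoeff (\<lambda>z. z ^ k) n * cnj (tcoeff h n) * of_real ((\<beta> n)^2))
      = (\<lambda>n. if n = k then cnj (tcoeff h k) * of_real ((\<beta> k)^2) else 0)"
    by (auto simp: tcoeff_pow)
  then show ?thesis unfolding H2_inner_def
    using sums_single[of k "\<lambda>_. cnj (tcoeff h k) * of_real ((\<beta> k)^2)"] by (simp add: sums_iff)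
qed

lemma tcoeff_lin:
  assumes "g holomorphic_on disc" "cmod c \<le> 1"
  shows "tcoeff (g \<circ> (\<lambda>z. c * z)) n = c ^ n * tcoeff g n"
proof -
  have cw: "c * w \<in> disc" if "w \<in> disc" for w
  proof -
    have "cmod (c * w) = cmod c * cmod w" by (rule norm_mult)
    also have "\<dots> \<le> cmod w" by (rule mult_left_le_one_le) (simp_all add: assms(2))
    finally show ?thesis using that by simp
  qed
  have "(deriv ^^ n) (\<lambda>w. g (c * w)) 0 = c ^ n * (deriv ^^ n) g (c * 0)"
    by (rule higher_deriv_compose_linear[where S=disc and T=disc, OF assms(1) _ _ _ cw]) auto
  then have h: "(deriv ^^ n) (\<lambda>w. g (c * w)) 0 = c ^ n * (deriv ^^ n) g 0"
    by (simp only: mult_zero_right)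
  have e: "g \<circ> (\<lambda>z. c * z) = (\<lambda>w. g (c * w))" by (rule ext) (simp only: o_apply)
  show ?thesis unfolding tcoeff_def e h by (rule times_divide_eq_right[symmetric])
qed

lemma tcoeff_cong:
  assumes "\<And>z. z \<in> disc \<Longrightarrow> f z = g z"
  shows "tcoeff f n = tcoeff g n"
proof -
  have "eventually (\<lambda>x. f x = g x) (nhds 0)"
    using eventually_nhds_in_open[of disc 0] assms
    by (auto elim!: eventually_mono)
  then show ?thesis unfolding tcoeff_def by (simp add: higher_deriv_cong_ev)
qed

theorem theorem3p3:
  fixes \<beta> :: "nat \<Rightarrow> real" and \<phi> :: "complex \<Rightarrow> complex"
  assumes "weight_seq \<beta>"
    and "bounded_comp_op \<beta> \<phi>"
  shows "(\<exists>\<psi>. adjoint_is_comp \<beta> \<phi> \<psi>) \<longleftrightarrow>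
         (\<exists>\<delta>::complex. cmod \<delta> \<le> 1 \<and> (\<forall>z\<in>disc. \<phi> z = \<delta> * z))"
proof
  assume "\<exists>\<psi>. adjoint_is_comp \<beta> \<phi> \<psi>"
  then obtain \<psi> where A: "adjoint_is_comp \<beta> \<phi> \<psi>" by blast
  have psd: "\<psi> ` disc \<subseteq> disc" and G: "\<And>g. in_H2 \<beta> g \<Longrightarrow> in_H2 \<beta> (g \<circ> \<psi>)"
    and E: "\<And>f g. in_H2 \<beta> f \<Longrightarrow> in_H2 \<beta> g \<Longrightarrow> H2_inner \<beta> (f \<circ> \<phi>) g = H2_inner \<beta> f (g \<circ> \<psi>)"
    using A unfolding adjoint_is_comp_def by auto
  have phol: "\<phi> holomorphic_on disc" and pd: "\<phi> ` disc \<subseteq> disc"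
    using assms(2) unfolding bounded_comp_op_def by auto
  have bpos: "\<And>n. \<beta> n > 0" and b0: "\<beta> 0 = 1" using assms(1) unfolding weight_seq_def by auto
  have "in_H2 \<beta> ((\<lambda>z. z ^ 1) \<circ> \<psi>)" by (rule G[OF in_H2_pow])
  then have pshol: "\<psi> holomorphic_on disc" by (simp add: in_H2_def o_def)
  have "H2_inner \<beta> ((\<lambda>z. z ^ 0) \<circ> \<phi>) (\<lambda>z. z ^ 1) = H2_inner \<beta> (\<lambda>z. z ^ 0) ((\<lambda>z. z ^ 1) \<circ> \<psi>)"
    by (rule E[OF in_H2_pow in_H2_pow])
  moreover have "(\<lambda>z::complex. z ^ 0) \<circ> \<phi> = (\<lambda>z. z ^ 0)" by (simp add: o_def)
  moreover have "(\<lambda>z::complex. z ^ 1) \<circ> \<psi> = \<psi>" by (simp add: o_def)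
  ultimately have "H2_inner \<beta> (\<lambda>z. z ^ 0) (\<lambda>z. z ^ 1) = H2_inner \<beta> (\<lambda>z. z ^ 0) \<psi>" by simp
  then have "tcoeff (\<lambda>z. z ^ 0) 1 * of_real ((\<beta> 1)^2) = cnj (tcoeff \<psi> 0) * of_real ((\<beta> 0)^2)"
    by (simp only: inner_pow_right inner_pow_left)
  then have ps0: "\<psi> 0 = 0" by (simp only: tcoeff_pow) (simp add: tcoeff_def b0)
  have phik: "tcoeff \<phi> n = 0" if "n \<noteq> 1" for n
  proof -
    have "H2_inner \<beta> ((\<lambda>z. z ^ 1) \<circ> \<phi>) (\<lambda>z. z ^ n) = H2_inner \<beta> (\<lambda>z. z ^ 1) ((\<lambda>z. z ^ n) \<circ> \<psi>)"
      by (rule E[OF in_H2_pow in_H2_pow])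
    moreover have "(\<lambda>z::complex. z ^ 1) \<circ> \<phi> = \<phi>" by (simp add: o_def)
    ultimately have "tcoeff \<phi> n * of_real ((\<beta> n)^2) = cnj (tcoeff ((\<lambda>z. z ^ n) \<circ> \<psi>) 1) * of_real ((\<beta> 1)^2)"
      by (simp only: inner_pow_right inner_pow_left)
    moreover have "tcoeff ((\<lambda>z. z ^ n) \<circ> \<psi>) 1 = 0"
    proof -
      have "(\<psi> has_field_derivative deriv \<psi> 0) (at 0)"
        using pshol by (intro holomorphic_derivI[of _ disc]) auto
      then have "((\<lambda>z. \<psi> z ^ n) has_field_derivative of_nat n * \<psi> 0 ^ (n - 1) * deriv \<psi> 0) (at 0)"
        by (auto intro!: derivative_eq_intros)
      then have "deriv (\<lambda>z. \<psi> z ^ n) 0 = of_nat n * \<psi> 0 ^ (n - 1) * deriv \<psi> 0"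
        by (rule DERIV_imp_deriv)
      moreover have "of_nat n * \<psi> 0 ^ (n - 1) = 0"
        using ps0 that by (cases "n = 0") auto
      ultimately show ?thesis by (simp add: tcoeff_def o_def)
    qed
    ultimately show ?thesis using bpos[of n] by simp
  qed
  define \<delta> where "\<delta> = tcoeff \<phi> 1"
  have eq: "\<phi> z = \<delta> * z" if z: "z \<in> disc" for z
  proof -
    have "(\<lambda>n. (deriv ^^ n) \<phi> 0 / fact n * (z - 0) ^ n) sums \<phi> z"
      using holomorphic_power_series[of \<phi> 0 1 z] phol z by simp
    moreover have "(\<lambda>n. (deriv ^^ n) \<phi> 0 / fact n * (z - 0) ^ n) = (\<lambda>n. if n = 1 then \<delta> * z else 0)"
    proof
      fix n
      show "(deriv ^^ n) \<phi> 0 / fact n * (z - 0) ^ n = (if n = 1 then \<delta> * z else 0)"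
        using phik[of n] unfolding \<delta>_def tcoeff_def by auto
    qed
    ultimately have "(\<lambda>n. if n = 1 then \<delta> * z else 0) sums \<phi> z" by simp
    moreover have "(\<lambda>n. if n = 1 then \<delta> * z else 0) sums (\<delta> * z)"
      using sums_single[of 1 "\<lambda>_. \<delta> * z"] by simp
    ultimately show ?thesis by (rule sums_unique2)
  qed
  have "cmod \<delta> \<le> 1"
  proof (rule ccontr)
    assume "\<not> cmod \<delta> \<le> 1"
    then have d1: "cmod \<delta> > 1" by simp
    then have "\<delta> \<noteq> 0" by auto
    have "cmod (1 / \<delta>) < 1" using d1 by (simp add: norm_divide divide_less_eq)
    then have "1 / \<delta> \<in> disc" by simp
    then have "\<phi> (1 / \<delta>) \<in> disc" using pd by blast
    moreover have "\<phi> (1 / \<delta>) = 1" using eq[OF \<open>1 / \<delta> \<in> disc\<close>] \<open>\<delta> \<noteq> 0\<close> by simp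
    ultimately show False by simp
  qed
  then show "\<exists>\<delta>::complex. cmod \<delta> \<le> 1 \<and> (\<forall>z\<in>disc. \<phi> z = \<delta> * z)" using eq by blast
next
  assume "\<exists>\<delta>::complex. cmod \<delta> \<le> 1 \<and> (\<forall>z\<in>disc. \<phi> z = \<delta> * z)"
  then obtain \<delta> where d1: "cmod \<delta> \<le> 1" and eq: "\<And>z. z \<in> disc \<Longrightarrow> \<phi> z = \<delta> * z" by blast
  define \<psi> where "\<psi> = (\<lambda>z::complex. cnj \<delta> * z)"
  have cd1: "cmod (cnj \<delta>) \<le> 1" using d1 by simp
  have psd: "\<psi> ` disc \<subseteq> disc"
  proof
    fix w assume "w \<in> \<psi> ` disc"
    then obtain z where z: "z \<in> disc" "w = cnj \<delta> * z" unfolding \<psi>_def by auto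
    have "cmod w = cmod \<delta> * cmod z" using z by (simp add: norm_mult)
    also have "\<dots> \<le> cmod z" using d1 by (simp add: mult_left_le_one_le)
    finally show "w \<in> disc" using z by simp
  qed
  have tc: "tcoeff (g \<circ> \<psi>) n = cnj \<delta> ^ n * tcoeff g n" if "g holomorphic_on disc" for g n
    unfolding \<psi>_def using tcoeff_lin[OF that cd1] .
  have G: "in_H2 \<beta> (g \<circ> \<psi>)" if g: "in_H2 \<beta> g" for g
  proof -
    have gh: "g holomorphic_on disc" and gs: "summable (\<lambda>n. (cmod (tcoeff g n))^2 * (\<beta> n)^2)"
      using g unfolding in_H2_def by auto
    have "(g \<circ> \<psi>) holomorphic_on disc"
      by (rule holomorphic_on_compose_gen[OF _ gh psd]) (auto simp: \<psi>_def intro!: holomorphic_intros)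
    moreover have "summable (\<lambda>n. (cmod (tcoeff (g \<circ> \<psi>) n))^2 * (\<beta> n)^2)"
    proof (rule summable_comparison_test[OF _ gs], intro exI[of _ 0] allI impI)
      fix n :: nat
      have "cmod (cnj \<delta> ^ n) \<le> 1" using cd1 by (simp add: norm_power power_le_one)
      then have "cmod (tcoeff (g \<circ> \<psi>) n) \<le> cmod (tcoeff g n)"
        using tc[OF gh] by (simp add: norm_mult mult_left_le_one_le)
      then have "(cmod (tcoeff (g \<circ> \<psi>) n))^2 \<le> (cmod (tcoeff g n))^2"
        by (simp add: power_mono)
      then show "norm ((cmod (tcoeff (g \<circ> \<psi>) n))^2 * (\<beta> n)^2) \<le> (cmod (tcoeff g n))^2 * (\<beta> n)^2"
        by (simp add: mult_right_mono)
    qed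
    ultimately show ?thesis unfolding in_H2_def by simp
  qed
  have "adjoint_is_comp \<beta> \<phi> \<psi>"
    unfolding adjoint_is_comp_def
  proof (intro conjI allI impI psd)
    fix g assume "in_H2 \<beta> g" then show "in_H2 \<beta> (g \<circ> \<psi>)" by (rule G)
  next
    fix f g assume f: "in_H2 \<beta> f" and g: "in_H2 \<beta> g"
    have fh: "f holomorphic_on disc" and gh: "g holomorphic_on disc" using f g unfolding in_H2_def by auto
    have tf: "tcoeff (f \<circ> \<phi>) n = \<delta> ^ n * tcoeff f n" for n
    proof -
      have "tcoeff (f \<circ> \<phi>) n = tcoeff (f \<circ> (\<lambda>z. \<delta> * z)) n"
        by (rule tcoeff_cong) (simp add: eq)
      also have "\<dots> = \<delta> ^ n * tcoeff f n" by (rule tcoeff_lin[OF fh d1])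
      finally show ?thesis .
    qed
    show "H2_inner \<beta> (f \<circ> \<phi>) g = H2_inner \<beta> f (g \<circ> \<psi>)"
      unfolding H2_inner_def tf tc[OF gh]
      by (simp add: complex_cnj_power mult_ac)
  qed
  then show "\<exists>\<psi>. adjoint_is_comp \<beta> \<phi> \<psi>" by blast
qed

end
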